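(* Let $\mathbf x_i$ denote $\mathbf m^t_i+\widehat{\nabla}_{\boldsymbol{\theta}} f_{\mathcal{B}_i}(\boldsymbol{\theta})$ for $i=1,\ldots,n$, and suppose $\mathbb{E}\|\mathrm{CLT}^k_i(\mathbf x_j)-\mathbf x_j\|^2\le\gamma_j\,\mathbb{E}\|\mathbf x_j\|^2$ for all $\mathbf x_i,\mathbf x_j$. Assume that gradients at different workers are positively correlated, i.e., there exists a positive constant $\kappa$ such that $\mathbb{E}[\mathbf x^T_i\mathbf x_j]\ge\kappa \|\mathbf x_i\|\|\mathbf x_j\|$ for all $i,j$, and that $\mathbb{E}\|\mathbf x_i\|^2=\mathbb{E}\|\mathbf x_j\|^2$ for all $i,j$. Then, if $\kappa>\big(n\sum^n_{i=1}\gamma_i-1\big)/\big(n(n-1)\big)$, we have $\gamma=\frac{ n\sum^n_{i=1}\gamma_i}{1+\kappa n(n-1)}<1$ such that $\mathbb{E}\|\mathbf y-\mathrm{CLT}^k_i(\mathbf y)\|^2\le\gamma\,\mathbb{E}\|\mathbf y\|^2$, where $\mathbf y=\frac{1}{n}\sum^n_{i=1}\mathbf x_i$.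
   Context: Distributed training with $n\ge 2$ workers minimizes $f(\boldsymbol{\theta})=\frac{1}{n}\sum_{i=1}^n f_i(\boldsymbol{\theta})$, $f_i(\boldsymbol{\theta})=\mathbb{E}_{\xi_i\sim\mathcal{D}}F(\boldsymbol{\theta},\xi_i)$ with identical data distribution $\mathcal{D}$ at all workers. Worker $i$ uses a mini-batch $\mathcal{B}_i$ and stochastic gradient estimate $\widehat{\nabla}_{\boldsymbol{\theta}} f_{\mathcal{B}_i}(\boldsymbol{\theta})=|\mathcal{B}_i|^{-1}\sum_{j\in\mathcal{B}_i}\nabla_{\boldsymbol{\theta}} f_{i,j}(\boldsymbol{\theta})$, and keeps a local memory (gradient residue / error feedback) $\mathbf m^t_i$ at iteration $t$. For a vector $\mathbf x$, $\mathcal{I}^k(\mathbf x)$ denotes the index set of its $k$ largest entries in magnitude. The cyclic local top-$k$ compressor with worker $i$ as leader, $\mathrm{CLT}^k_i:\mathbb{R}^p\to\mathbb{R}^p$, is defined entrywise by $[\mathrm{CLT}^k_i(\mathbf x_j)]_m=(\mathbf x_j)_m$ if $m\in\mathcal{I}^k(\mathbf x_i)$ and $0$ otherwise, i.e., every worker's vector is sparsified using the top-$k$ indices of the leader's vector $\mathbf x_i$; it is linear in its argument for a fixed leader index set (so $\mathrm{CLT}^k_i(\frac1n\sum_j\mathbf x_j)=\frac1n\sum_j\mathrm{CLT}^k_i(\mathbf x_j)$). *)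

theory Defs
  imports "HOL-Probability.Probability"
begin

definition topk_idx :: "nat \<Rightarrow> real^'p::finite \<Rightarrow> 'p set" where
  "topk_idx k x = (SOME S. card S = min k CARD('p) \<and>
      (\<forall>i\<in>S. \<forall>j. j \<notin> S \<longrightarrow> \<bar>x $ j\<bar> \<le> \<bar>x $ i\<bar>))"

definition CLT :: "nat \<Rightarrow> real^'p::finite \<Rightarrow> real^'p \<Rightarrow> real^'p" where
  "CLT k leader v = (\<chi> m. if m \<in> topk_idx k leader then v $ m else 0)"

end

theory Submission
  imports Defs
begin

lemma clt_lin: "CLT k a ((c::real) *\<^sub>R (\<Sum>j\<in>A. v j)) = c *\<^sub>R (\<Sum>j\<in>A. CLT k a (v j))"
  unfolding CLT_def by (auto simp: vec_eq_iff sum_distrib_left)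
lemma clt_norm: "norm (CLT k a v - v) \<le> norm v"
proof -
  have "norm (CLT k a v - v) \<le> norm v"
    unfolding norm_vec_def
    by (rule L2_set_mono) (auto simp: CLT_def)
  thus ?thesis .
qed
lemma sq_sum: "finite A \<Longrightarrow> (norm (\<Sum>j\<in>A. (v j :: real^'p::finite)))\<^sup>2 \<le> real (card A) * (\<Sum>j\<in>A. (norm (v j))\<^sup>2)"
proof -
  have "norm (\<Sum>j\<in>A. v j) \<le> (\<Sum>j\<in>A. norm (v j))" by (rule norm_sum)
  hence "(norm (\<Sum>j\<in>A. v j))\<^sup>2 \<le> (\<Sum>j\<in>A. norm (v j))\<^sup>2"
    by (simp add: power_mono)
  also have "\<dots> \<le> (\<Sum>j\<in>A. (norm (v j))\<^sup>2) * real (card A)" by (rule sum_squared_le_sum_of_squares)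
  finally show ?thesis by (simp add: mult.commute)
qed

theorem lemma2:
  fixes M :: "'a measure"
    and x :: "nat \<Rightarrow> 'a \<Rightarrow> real^'p::finite"
    and n k l :: nat
    and \<gamma>s :: "nat \<Rightarrow> real"
    and \<kappa> :: real
  assumes "prob_space M"
    and n2: "n \<ge> 2"
    and leader: "l \<in> {1..n}"
    and meas: "\<And>j. j \<in> {1..n} \<Longrightarrow> x j \<in> borel_measurable M"
    and sqint: "\<And>j. j \<in> {1..n} \<Longrightarrow> integrable M (\<lambda>\<omega>. (norm (x j \<omega>))\<^sup>2)"
    and meas_clt: "\<And>j. j \<in> {1..n} \<Longrightarrow> (\<lambda>\<omega>. CLT k (x l \<omega>) (x j \<omega>)) \<in> borel_measurable M"
    and compr: "\<And>j. j \<in> {1..n} \<Longrightarrow>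
        (\<integral>\<omega>. (norm (CLT k (x l \<omega>) (x j \<omega>) - x j \<omega>))\<^sup>2 \<partial>M)
          \<le> \<gamma>s j * (\<integral>\<omega>. (norm (x j \<omega>))\<^sup>2 \<partial>M)"
    and kpos: "\<kappa> > 0"
    and corr: "\<And>i j. i \<in> {1..n} \<Longrightarrow> j \<in> {1..n} \<Longrightarrow>
        (\<integral>\<omega>. x i \<omega> \<bullet> x j \<omega> \<partial>M)
          \<ge> \<kappa> * sqrt (\<integral>\<omega>. (norm (x i \<omega>))\<^sup>2 \<partial>M) * sqrt (\<integral>\<omega>. (norm (x j \<omega>))\<^sup>2 \<partial>M)"
    and eqmom: "\<And>i j. i \<in> {1..n} \<Longrightarrow> j \<in> {1..n} \<Longrightarrow>
        (\<integral>\<omega>. (norm (x i \<omega>))\<^sup>2 \<partial>M) = (\<integral>\<omega>. (norm (x j \<omega>))\<^sup>2 \<partial>M)"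
    and kbig: "\<kappa> > (real n * (\<Sum>i=1..n. \<gamma>s i) - 1) / (real n * (real n - 1))"
  shows "let \<gamma> = real n * (\<Sum>i=1..n. \<gamma>s i) / (1 + \<kappa> * real n * (real n - 1));
             y = (\<lambda>\<omega>. (1 / real n) *\<^sub>R (\<Sum>i=1..n. x i \<omega>))
         in \<gamma> < 1 \<and>
            (\<integral>\<omega>. (norm (y \<omega> - CLT k (x l \<omega>) (y \<omega>)))\<^sup>2 \<partial>M)
              \<le> \<gamma> * (\<integral>\<omega>. (norm (y \<omega>))\<^sup>2 \<partial>M)"
  
proof -
  interpret P: prob_space M by fact
  define I where "I = {1..n}"
  define N where "N = real n"
  define S where "S = (\<Sum>i=1..n. \<gamma>s i)"
  define s where "s = (\<integral>\<omega>. (norm (x 1 \<omega>))\<^sup>2 \<partial>M)"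
  define y where "y = (\<lambda>\<omega>. (1 / real n) *\<^sub>R (\<Sum>i=1..n. x i \<omega>))"
  define D where "D = 1 + \<kappa> * N * (N - 1)"
  have fin: "finite I" unfolding I_def by simp
  have cardI: "card I = n" unfolding I_def by simp
  have N2: "N \<ge> 2" using n2 unfolding N_def by simp
  have one: "1 \<in> I" using n2 unfolding I_def by simp
  have sj: "\<And>j. j \<in> I \<Longrightarrow> (\<integral>\<omega>. (norm (x j \<omega>))\<^sup>2 \<partial>M) = s"
    using eqmom one unfolding s_def I_def by blast
  have s0: "s \<ge> 0" unfolding s_def by (rule integral_nonneg_AE) simp
  have Dpos: "D > 0" using kpos N2 unfolding D_def by (simp add: add_pos_nonneg)
  have cint: "integrable M (\<lambda>\<omega>. (norm (CLT k (x l \<omega>) (x j \<omega>) - x j \<omega>))\<^sup>2)" if j: "j \<in> I" for j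
  proof (rule Bochner_Integration.integrable_bound[OF sqint])
    show "j \<in> {1..n}" using j unfolding I_def .
    show "(\<lambda>\<omega>. (norm (CLT k (x l \<omega>) (x j \<omega>) - x j \<omega>))\<^sup>2) \<in> borel_measurable M"
      using meas_clt[of j] meas[of j] j unfolding I_def by measurable
    show "AE \<omega> in M. norm ((norm (CLT k (x l \<omega>) (x j \<omega>) - x j \<omega>))\<^sup>2) \<le> norm ((norm (x j \<omega>))\<^sup>2)"
      by (auto intro!: power_mono clt_norm)
  qed
  have ydiff: "y \<omega> - CLT k (x l \<omega>) (y \<omega>) = (1/N) *\<^sub>R (\<Sum>j\<in>I. x j \<omega> - CLT k (x l \<omega>) (x j \<omega>))" for \<omega>
    unfolding y_def clt_lin N_def I_def by (simp add: sum_subtractf scaleR_right_diff_distrib)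
  have pw: "(norm (y \<omega> - CLT k (x l \<omega>) (y \<omega>)))\<^sup>2 \<le> (1/N) * (\<Sum>j\<in>I. (norm (CLT k (x l \<omega>) (x j \<omega>) - x j \<omega>))\<^sup>2)" for \<omega>
  proof -
    have "(norm (y \<omega> - CLT k (x l \<omega>) (y \<omega>)))\<^sup>2 = (1/N)^2 * (norm (\<Sum>j\<in>I. x j \<omega> - CLT k (x l \<omega>) (x j \<omega>)))\<^sup>2"
      unfolding ydiff using N2 by (simp add: power_mult_distrib power_divide)
    also have "\<dots> \<le> (1/N)^2 * (N * (\<Sum>j\<in>I. (norm (x j \<omega> - CLT k (x l \<omega>) (x j \<omega>)))\<^sup>2))"
      by (rule mult_left_mono) (use sq_sum[OF fin] cardI N_def in auto)
    also have "\<dots> = (1/N) * (\<Sum>j\<in>I. (norm (CLT k (x l \<omega>) (x j \<omega>) - x j \<omega>))\<^sup>2)"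
      using N2 by (simp add: power2_eq_square norm_minus_commute)
    finally show ?thesis .
  qed
  have LHS: "(\<integral>\<omega>. (norm (y \<omega> - CLT k (x l \<omega>) (y \<omega>)))\<^sup>2 \<partial>M) \<le> S * s / N"
  proof -
    have "(\<integral>\<omega>. (norm (y \<omega> - CLT k (x l \<omega>) (y \<omega>)))\<^sup>2 \<partial>M)
        \<le> (\<integral>\<omega>. (1/N) * (\<Sum>j\<in>I. (norm (CLT k (x l \<omega>) (x j \<omega>) - x j \<omega>))\<^sup>2) \<partial>M)"
    proof (rule integral_mono')
      show "integrable M (\<lambda>\<omega>. (1/N) * (\<Sum>j\<in>I. (norm (CLT k (x l \<omega>) (x j \<omega>) - x j \<omega>))\<^sup>2))"
        using cint by (intro integrable_mult_right Bochner_Integration.integrable_sum) auto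
      show "(norm (y \<omega> - CLT k (x l \<omega>) (y \<omega>)))\<^sup>2 \<le> (1/N) * (\<Sum>j\<in>I. (norm (CLT k (x l \<omega>) (x j \<omega>) - x j \<omega>))\<^sup>2)" for \<omega>
        by (rule pw)
      show "0 \<le> (1/N) * (\<Sum>j\<in>I. (norm (CLT k (x l \<omega>) (x j \<omega>) - x j \<omega>))\<^sup>2)" for \<omega>
        using N2 by (intro mult_nonneg_nonneg sum_nonneg) auto
    qed
    also have "\<dots> = (1/N) * (\<Sum>j\<in>I. (\<integral>\<omega>. (norm (CLT k (x l \<omega>) (x j \<omega>) - x j \<omega>))\<^sup>2 \<partial>M))"
      using cint by (simp add: integral_sum)
    also have "\<dots> \<le> (1/N) * (\<Sum>j\<in>I. \<gamma>s j * s)"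
      using N2 compr sj unfolding I_def by (intro mult_left_mono sum_mono) auto
    also have "\<dots> = S * s / N" unfolding S_def I_def by (simp add: sum_distrib_right)
    finally show ?thesis .
  qed
  have iint: "integrable M (\<lambda>\<omega>. x i \<omega> \<bullet> x j \<omega>)" if "i \<in> I" "j \<in> I" for i j
  proof (rule Bochner_Integration.integrable_bound[OF Bochner_Integration.integrable_add[OF sqint[of i] sqint[of j]]])
    show "i \<in> {1..n}" "j \<in> {1..n}" using that unfolding I_def by auto
    show "(\<lambda>\<omega>. x i \<omega> \<bullet> x j \<omega>) \<in> borel_measurable M"
      using meas[of i] meas[of j] that unfolding I_def by measurable
    have "\<bar>a \<bullet> b\<bar> \<le> (norm a)\<^sup>2 + (norm b)\<^sup>2" for a b :: "real^'p"
    proof -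
      have "\<bar>a \<bullet> b\<bar> \<le> norm a * norm b" by (rule Cauchy_Schwarz_ineq2)
      also have "\<dots> \<le> (norm a)\<^sup>2 + (norm b)\<^sup>2" 
      proof -
        have "0 \<le> (norm a - norm b)\<^sup>2" by simp
        moreover have "0 \<le> norm a * norm b" by simp
        ultimately have "2 * (norm a * norm b) \<le> (norm a)\<^sup>2 + (norm b)\<^sup>2"
          by (simp add: power2_eq_square algebra_simps)
        with \<open>0 \<le> norm a * norm b\<close> show ?thesis by linarith
      qed
      finally show ?thesis .
    qed
    then show "AE \<omega> in M. norm (x i \<omega> \<bullet> x j \<omega>) \<le> norm ((norm (x i \<omega>))\<^sup>2 + (norm (x j \<omega>))\<^sup>2)"
      by auto
  qed
  have ynorm: "(norm (y \<omega>))\<^sup>2 = (1/N^2) * (\<Sum>i\<in>I. \<Sum>j\<in>I. x i \<omega> \<bullet> x j \<omega>)" for \<omega>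
    unfolding y_def power2_norm_eq_inner N_def I_def
    by (simp add: inner_sum_left inner_sum_right power2_eq_square sum_divide_distrib[symmetric] sum.swap[of _ "{1..n}" "{1..n}"] inner_commute)
  have Ey: "(\<integral>\<omega>. (norm (y \<omega>))\<^sup>2 \<partial>M) = (1/N^2) * (\<Sum>i\<in>I. \<Sum>j\<in>I. (\<integral>\<omega>. x i \<omega> \<bullet> x j \<omega> \<partial>M))"
    unfolding ynorm using iint by (simp add: integral_sum)
  have elem: "(\<integral>\<omega>. x i \<omega> \<bullet> x j \<omega> \<partial>M) \<ge> \<kappa> * s + (if j = i then (1 - \<kappa>) * s else 0)"
    if "i \<in> I" "j \<in> I" for i j
  proof (cases "j = i")
    case True
    then show ?thesis using sj[OF that(1)] by (simp add: power2_norm_eq_inner algebra_simps)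
  next
    case False
    have "sqrt s * sqrt s = s" using s0 by simp
    then show ?thesis using corr[of i j] that sj False unfolding I_def by (simp add: mult.assoc)
  qed
  have Eylow: "(\<integral>\<omega>. (norm (y \<omega>))\<^sup>2 \<partial>M) \<ge> (s + (N - 1) * \<kappa> * s) / N"
  proof -
    have "(\<Sum>i\<in>I. \<Sum>j\<in>I. (\<integral>\<omega>. x i \<omega> \<bullet> x j \<omega> \<partial>M)) \<ge> (\<Sum>i\<in>I. \<Sum>j\<in>I. \<kappa> * s + (if j = i then (1 - \<kappa>) * s else 0))"
      using elem by (intro sum_mono) auto
    also have "(\<Sum>i\<in>I. \<Sum>j\<in>I. \<kappa> * s + (if j = i then (1 - \<kappa>) * s else 0)) = N * (N * \<kappa> * s + (1 - \<kappa>) * s)"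
      using fin cardI by (simp add: sum.distrib N_def)
    finally have "(\<Sum>i\<in>I. \<Sum>j\<in>I. (\<integral>\<omega>. x i \<omega> \<bullet> x j \<omega> \<partial>M)) \<ge> N * (N * \<kappa> * s + (1 - \<kappa>) * s)" .
    hence "(\<integral>\<omega>. (norm (y \<omega>))\<^sup>2 \<partial>M) \<ge> (1/N^2) * (N * (N * \<kappa> * s + (1 - \<kappa>) * s))"
      unfolding Ey using N2 by (intro mult_left_mono) auto
    also have "(1/N^2) * (N * (N * \<kappa> * s + (1 - \<kappa>) * s)) = (s + (N - 1) * \<kappa> * s) / N"
      using N2 by (simp add: field_simps power2_eq_square)
    finally show ?thesis .
  qed
  have Eyup: "(\<integral>\<omega>. (norm (y \<omega>))\<^sup>2 \<partial>M) \<le> s"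
  proof -
    have pw2: "(norm (y \<omega>))\<^sup>2 \<le> (1/N) * (\<Sum>j\<in>I. (norm (x j \<omega>))\<^sup>2)" for \<omega>
    proof -
      have "(norm (y \<omega>))\<^sup>2 = (1/N)^2 * (norm (\<Sum>j\<in>I. x j \<omega>))\<^sup>2"
        unfolding y_def N_def I_def using N2 by (simp add: power_mult_distrib power_divide)
      also have "\<dots> \<le> (1/N)^2 * (N * (\<Sum>j\<in>I. (norm (x j \<omega>))\<^sup>2))"
        by (rule mult_left_mono) (use sq_sum[OF fin] cardI N_def in auto)
      also have "\<dots> = (1/N) * (\<Sum>j\<in>I. (norm (x j \<omega>))\<^sup>2)"
        using N2 by (simp add: power2_eq_square)
      finally show ?thesis .
    qed
    have "(\<integral>\<omega>. (norm (y \<omega>))\<^sup>2 \<partial>M) \<le> (\<integral>\<omega>. (1/N) * (\<Sum>j\<in>I. (norm (x j \<omega>))\<^sup>2) \<partial>M)"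
    proof (rule integral_mono')
      show "integrable M (\<lambda>\<omega>. (1/N) * (\<Sum>j\<in>I. (norm (x j \<omega>))\<^sup>2))"
        using sqint unfolding I_def by (intro integrable_mult_right Bochner_Integration.integrable_sum) auto
      show "(norm (y \<omega>))\<^sup>2 \<le> (1/N) * (\<Sum>j\<in>I. (norm (x j \<omega>))\<^sup>2)" for \<omega>
        by (rule pw2)
      show "0 \<le> (1/N) * (\<Sum>j\<in>I. (norm (x j \<omega>))\<^sup>2)" for \<omega>
        using N2 by (intro mult_nonneg_nonneg sum_nonneg) auto
    qed
    also have "\<dots> = (1/N) * (\<Sum>j\<in>I. (\<integral>\<omega>. (norm (x j \<omega>))\<^sup>2 \<partial>M))"
      using sqint unfolding I_def by (simp add: integral_sum)
    also have "\<dots> = s" using sj cardI N2 unfolding N_def by simp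
    finally show ?thesis .
  qed
  have Ey0: "(\<integral>\<omega>. (norm (y \<omega>))\<^sup>2 \<partial>M) \<ge> 0" by (rule integral_nonneg_AE) simp
  have glt: "N * S / D < 1"
  proof -
    have "N * (N - 1) > 0" using N2 by simp
    hence "\<kappa> * (N * (N - 1)) > N * S - 1" using kbig unfolding N_def S_def
      by (simp add: pos_divide_less_eq)
    hence "N * S < D" unfolding D_def by (simp add: algebra_simps)
    thus ?thesis using Dpos by simp
  qed
  have main: "(\<integral>\<omega>. (norm (y \<omega> - CLT k (x l \<omega>) (y \<omega>)))\<^sup>2 \<partial>M) \<le> N * S / D * (\<integral>\<omega>. (norm (y \<omega>))\<^sup>2 \<partial>M)"
  proof (cases "s = 0")
    case True
    then have "(\<integral>\<omega>. (norm (y \<omega>))\<^sup>2 \<partial>M) = 0" using Eyup Ey0 by simp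
    then show ?thesis using LHS True by simp
  next
    case False
    hence spos: "s > 0" using s0 by simp
    have gj: "\<gamma>s j \<ge> 0" if "j \<in> {1..n}" for j
    proof -
      have "0 \<le> (\<integral>\<omega>. (norm (CLT k (x l \<omega>) (x j \<omega>) - x j \<omega>))\<^sup>2 \<partial>M)"
        by (rule integral_nonneg_AE) simp
      also have "\<dots> \<le> \<gamma>s j * s" using compr[OF that] sj[of j] that unfolding I_def by simp
      finally show ?thesis using spos by (simp add: zero_le_mult_iff)
    qed
    have S0: "S \<ge> 0" unfolding S_def using gj by (intro sum_nonneg) auto
    have g0: "N * S / D \<ge> 0" using S0 N2 Dpos by simp
    have "S * s / N \<le> N * S / D * ((s + (N - 1) * \<kappa> * s) / N)"
    proof -
      have "N * S / D * ((s + (N - 1) * \<kappa> * s) / N) = S * s * (1 + (N - 1) * \<kappa>) / D"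
        using N2 Dpos by (simp add: field_simps)
      moreover have "S * s / N \<le> S * s * (1 + (N - 1) * \<kappa>) / D"
      proof -
        have "D \<le> N * (1 + (N - 1) * \<kappa>)" unfolding D_def using N2 kpos by (simp add: algebra_simps)
        hence "S * s * D \<le> S * s * (N * (1 + (N - 1) * \<kappa>))"
          using S0 s0 by (intro mult_left_mono) auto
        thus ?thesis using N2 Dpos by (simp add: divide_simps mult.commute mult.left_commute mult.assoc)
      qed
      ultimately show ?thesis by simp
    qed
    also have "\<dots> \<le> N * S / D * (\<integral>\<omega>. (norm (y \<omega>))\<^sup>2 \<partial>M)"
      using Eylow g0 by (intro mult_left_mono) auto
    finally show ?thesis using LHS by simp
  qed
  show ?thesis
    using glt main unfolding Let_def y_def N_def S_def D_def by simp
qed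

end
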